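(* Suppose UE $j$ decodes $x_{B1}$ first ($j\overset{(1)}{\to}x_{B1}$), while UE $i$ does not decode $x_{A1}$ first. Then the rate region $\mathcal{R}_{3}(\mathcal{P}_{3})\cup\mathcal{R}_{4}(\mathcal{P}_{4})$ is achievable, where $$\mathcal{R}_{3}(\mathcal{P}_{3})=\bigcup_{\mathbf{p}\in\mathcal{P}_{3}}\Big\{\mathbf{r}\in\mathbb{R}_+^4\;\Big|\; r_{i,s}\le C\Big(\tfrac{p_{i,s}}{\alpha_{i}}\Big)\ (s=1,2),\; r_{i,1}+r_{i,2}\le C\Big(\tfrac{p_{i,1}+p_{i,2}}{\alpha_{i}}\Big),\; r_{j,1}\le C\Big(\tfrac{p_{j,1}}{p_{i,2}+p_{j,2}+\alpha_{j}}\Big),\; r_{j,2}\le C\Big(\tfrac{p_{j,2}}{p_{i,2}+\alpha_{j}}\Big)\Big\},$$ $$\mathcal{R}_{4}(\mathcal{P}_{4})=\bigcup_{\mathbf{p}\in\mathcal{P}_{4}}\Big\{\mathbf{r}\in\mathbb{R}_+^4\;\Big|\; r_{i,1}\le C\Big(\tfrac{p_{i,1}}{p_{j,2}+\alpha_{i}}\Big),\; r_{i,2}\le C\Big(\tfrac{p_{i,2}}{p_{i,1}+p_{j,2}+\alpha_{i}}\Big),\; r_{j,1}\le C\Big(\tfrac{p_{j,1}}{p_{i,2}+p_{j,2}+\alpha_{j}}\Big),\; r_{j,2}\le C\Big(\tfrac{p_{j,2}}{\alpha_{j}}\Big)\Big\},$$ with $\mathcal{P}_{3}=\{\mathbf{p}\in\mathcal{P}\mid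 p_{i,1}<\alpha_{j}-\alpha_{i}\}$ and $\mathcal{P}_{4}=\mathcal{P}\setminus\mathcal{P}_{3}$. The region $\mathcal{R}_{3}(\mathcal{P}_{3})$ is achieved by the decoding orders $i\overset{(1)}{\to}x_{B2}\overset{(2)}{\to}(x_{A1},x_{A2})$ and $j\overset{(1)}{\to}x_{B1}\overset{(2)}{\to}x_{B2}$; the region $\mathcal{R}_{4}(\mathcal{P}_{4})$ is achieved by the decoding orders $i\overset{(1)}{\to}x_{A2}\overset{(2)}{\to}x_{A1}$ and $j\overset{(1)}{\to}x_{B1}\overset{(2)}{\to}x_{A2}\overset{(3)}{\to}x_{B2}$.
   Context: Two-user downlink with a single-antenna base station (BS) and user equipments UE $i$ and UE $j$. UE $i$ requests file $W_A$ and UE $j$ requests file $W_B$; each file $W_f$ is split into subfiles, and the BS transmits four independent unit-power Gaussian codewords $x_{A1},x_{A2}$ (intended for UE $i$) and $x_{B1},x_{B2}$ (intended for UE $j$) with transmit powers $p_{i,1},p_{i,2},p_{j,1},p_{j,2}\ge 0$, i.e. $x=\sqrt{p_{i,1}}x_{A1}+\sqrt{p_{i,2}}x_{A2}+\sqrt{p_{j,1}}x_{B1}+\sqrt{p_{j,2}}x_{B2}$. Power vector $\mathbf{p}=(p_{i,1},p_{i,2},p_{j,1},p_{j,2})$, feasible set $\mathcal{P}=\{\mathbf{p}\in\mathbb{R}_+^4\mid p_{i,1}+p_{i,2}+p_{j,1}+p_{j,2}\le P\}$ for a total power budget $P>0$. UE $k$ receives $y_k=h_kx+z_k$ with $z_k\sim\mathcal{CN}(0,\sigma_k^2)$;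 the effective noise variance is $\alpha_k=\sigma_k^2/|h_k|^2$, and it is assumed $0<\alpha_i<\alpha_j$. Because UE $j$ has cached the data carried by $x_{A1}$ and UE $i$ has cached the data carried by $x_{B1}$, these are removed by cache-enabled interference cancellation, so the effective received signals (after normalizing by $h_k$) are: at UE $i$, $\sqrt{p_{i,1}}x_{A1}+\sqrt{p_{i,2}}x_{A2}+\sqrt{p_{j,2}}x_{B2}$ plus Gaussian noise of variance $\alpha_i$; at UE $j$, $\sqrt{p_{i,2}}x_{A2}+\sqrt{p_{j,1}}x_{B1}+\sqrt{p_{j,2}}x_{B2}$ plus Gaussian noise of variance $\alpha_j$. $C(\Gamma)=\log_2(1+\Gamma)$. Rate vector $\mathbf{r}=(r_{i,1},r_{i,2},r_{j,1},r_{j,2})$, where $r_{i,s}$ is the rate of $x_{As}$ and $r_{j,s}$ the rate of $x_{Bs}$. Receivers perform successive interference cancellation (SIC): signals are decoded in steps, each decoded signal being subtracted before later steps and undecoded signals treated as Gaussian noise; several signals may be jointly decoded in one step (multiple-access decoding). A signal intended for the other user may be decoded and cancelled only if its rate is supported at that decoding step at the decoding user. Notation: $k\overset{(n)}{\to}x_f$ means $x_f$ is the $n$-th decoded signal at UE $k$; $k\overset{(n)}{\to}(x_f,x_{f'})$ means $x_f,x_{f'}$ are jointly decoded in the $n$-th step. A rate vector is achievable if there is a power vector in the indicated set and decoding orders under which all intended signals (and all cancelled interfering signals) are decoded reliably at those rates. *)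

theory Defs
  imports Complex_Main
begin

text \<open>The four codewords x_A1, x_A2 (intended for UE i) and x_B1, x_B2 (intended for UE j).\<close>
datatype sig = A1 | A2 | B1 | B2

definition Cap :: "real \<Rightarrow> real" where
  "Cap g = log 2 (1 + g)"

text \<open>Power vectors and rate vectors are functions sig => real:
  p A1 = p_{i,1}, p A2 = p_{i,2}, p B1 = p_{j,1}, p B2 = p_{j,2}; likewise for rates.\<close>

definition feasible_powers :: "real \<Rightarrow> (sig \<Rightarrow> real) set" where
  "feasible_powers Ptot = {p. (\<forall>s. 0 \<le> p s) \<and> p A1 + p A2 + p B1 + p B2 \<le> Ptot}"

definition P3 :: "real \<Rightarrow> real \<Rightarrow> real \<Rightarrow> (sig \<Rightarrow> real) set" where
  "P3 Ptot ai aj = {p \<in> feasible_powers Ptot. p A1 < aj - ai}"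

definition P4 :: "real \<Rightarrow> real \<Rightarrow> real \<Rightarrow> (sig \<Rightarrow> real) set" where
  "P4 Ptot ai aj = feasible_powers Ptot - P3 Ptot ai aj"

text \<open>Signals present (after cache-enabled interference cancellation) at UE i and UE j.\<close>
definition recv_i :: "sig set" where "recv_i = {A1, A2, B2}"
definition recv_j :: "sig set" where "recv_j = {A2, B1, B2}"

text \<open>SIC with joint (multiple-access) decoding steps. U is the set of not yet decoded signals present
  at the receiver (undecoded signals are treated as Gaussian noise).\<close>
fun sic_ok :: "real \<Rightarrow> (sig \<Rightarrow> real) \<Rightarrow> (sig \<Rightarrow> real) \<Rightarrow> sig set list \<Rightarrow> sig set \<Rightarrow> bool" where
  "sic_ok a p r [] U = True"
| "sic_ok a p r (S # Ss) U =
     (S \<noteq> {} \<and> S \<subseteq> U \<and>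
      (\<forall>T. T \<subseteq> S \<and> T \<noteq> {} \<longrightarrow>
          (\<Sum>s\<in>T. r s) \<le> Cap ((\<Sum>s\<in>T. p s) / ((\<Sum>s\<in>U - S. p s) + a))) \<and>
      sic_ok a p r Ss (U - S))"

definition achieved_by ::
  "real \<Rightarrow> real \<Rightarrow> (sig \<Rightarrow> real) \<Rightarrow> (sig \<Rightarrow> real) \<Rightarrow> sig set list \<Rightarrow> sig set list \<Rightarrow> bool" where
  "achieved_by ai aj p r oi oj \<longleftrightarrow>
     (\<forall>s. 0 \<le> r s) \<and>
     sic_ok ai p r oi recv_i \<and> sic_ok aj p r oj recv_j \<and>
     {A1, A2} \<subseteq> \<Union>(set oi) \<and> {B1, B2} \<subseteq> \<Union>(set oj)"

definition achievable :: "real \<Rightarrow> real \<Rightarrow> (sig \<Rightarrow> real) set \<Rightarrow> (sig \<Rightarrow> real) \<Rightarrow> bool" where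
  "achievable ai aj Q r \<longleftrightarrow> (\<exists>p\<in>Q. \<exists>oi oj. achieved_by ai aj p r oi oj)"

definition R3_of :: "real \<Rightarrow> real \<Rightarrow> (sig \<Rightarrow> real) \<Rightarrow> (sig \<Rightarrow> real) set" where
  "R3_of ai aj p = {r. (\<forall>s. 0 \<le> r s) \<and>
     r A1 \<le> Cap (p A1 / ai) \<and> r A2 \<le> Cap (p A2 / ai) \<and>
     r A1 + r A2 \<le> Cap ((p A1 + p A2) / ai) \<and>
     r B1 \<le> Cap (p B1 / (p A2 + p B2 + aj)) \<and>
     r B2 \<le> Cap (p B2 / (p A2 + aj))}"

definition R4_of :: "real \<Rightarrow> real \<Rightarrow> (sig \<Rightarrow> real) \<Rightarrow> (sig \<Rightarrow> real) set" where
  "R4_of ai aj p = {r. (\<forall>s. 0 \<le> r s) \<and>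
     r A1 \<le> Cap (p A1 / (p B2 + ai)) \<and>
     r A2 \<le> Cap (p A2 / (p A1 + p B2 + ai)) \<and>
     r B1 \<le> Cap (p B1 / (p A2 + p B2 + aj)) \<and>
     r B2 \<le> Cap (p B2 / aj)}"

definition R3 :: "real \<Rightarrow> real \<Rightarrow> real \<Rightarrow> (sig \<Rightarrow> real) set" where
  "R3 Ptot ai aj = (\<Union>p\<in>P3 Ptot ai aj. R3_of ai aj p)"

definition R4 :: "real \<Rightarrow> real \<Rightarrow> real \<Rightarrow> (sig \<Rightarrow> real) set" where
  "R4 Ptot ai aj = (\<Union>p\<in>P4 Ptot ai aj. R4_of ai aj p)"

end

theory Submission
  imports Defs
begin

lemma Cap_mono: "0 \<le> x \<Longrightarrow> x \<le> y \<Longrightarrow> Cap x \<le> Cap y"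
  unfolding Cap_def by simp

lemma div_anti: "(0::real) \<le> p \<Longrightarrow> 0 < a \<Longrightarrow> a \<le> b \<Longrightarrow> p / b \<le> p / a"
  by (simp add: divide_left_mono)

lemma sub1: "T \<subseteq> {x} \<Longrightarrow> T \<noteq> {} \<Longrightarrow> T = {x}" by blast
lemma sub2: "T \<subseteq> {x, y} \<Longrightarrow> T \<noteq> {} \<Longrightarrow> T = {x} \<or> T = {y} \<or> T = {x, y}" by blast

lemma diffs:
  "recv_i - {B2} = {A1, A2}" "recv_i - {A2} = {A1, B2}" "{A1,B2} - {A1} = {B2}"
  "recv_j - {B1} = {A2, B2}" "{A2,B2} - {A2} = {B2}" "{A2,B2} - {B2} = {A2}"
  "{A1,A2} - {A1,A2} = {}" "{B2} - {B2} = {}"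
  by (auto simp: recv_i_def recv_j_def)

lemma part3:
  assumes "0 < ai" "ai < aj" "p \<in> P3 Ptot ai aj" "r \<in> R3_of ai aj p"
  shows "achieved_by ai aj p r [{B2}, {A1, A2}] [{B1}, {B2}]"
proof -
  have f: "\<forall>s. 0 \<le> p s" and lt: "p A1 < aj - ai"
    using assms(3) by (auto simp: P3_def feasible_powers_def)
  have r: "\<forall>s. 0 \<le> r s" "r A1 \<le> Cap (p A1 / ai)" "r A2 \<le> Cap (p A2 / ai)"
     "r A1 + r A2 \<le> Cap ((p A1 + p A2) / ai)"
     "r B1 \<le> Cap (p B1 / (p A2 + p B2 + aj))"
     "r B2 \<le> Cap (p B2 / (p A2 + aj))" using assms(4) by (auto simp: R3_of_def)
  have "Cap (p B2 / (p A2 + aj)) \<le> Cap (p B2 / (p A1 + p A2 + ai))"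
    apply (rule Cap_mono)
    using f assms(1,2) apply simp
    apply (rule div_anti) using f assms(1) lt by (auto simp: add_nonneg_pos)
  hence b2: "r B2 \<le> Cap (p B2 / (p A1 + p A2 + ai))" using r by linarith
  show ?thesis unfolding achieved_by_def
    using r b2 by (auto simp: diffs insert_Diff_if recv_i_def recv_j_def add.assoc dest!: sub1 sub2)
qed

lemma part4:
  assumes "0 < ai" "ai < aj" "p \<in> P4 Ptot ai aj" "r \<in> R4_of ai aj p"
  shows "achieved_by ai aj p r [{A2}, {A1}] [{B1}, {A2}, {B2}]"
proof -
  have f: "\<forall>s. 0 \<le> p s" and lt: "p A1 \<ge> aj - ai"
    using assms(3) by (auto simp: P4_def P3_def feasible_powers_def)
  have r: "\<forall>s. 0 \<le> r s" "r A1 \<le> Cap (p A1 / (p B2 + ai))"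
     "r A2 \<le> Cap (p A2 / (p A1 + p B2 + ai))"
     "r B1 \<le> Cap (p B1 / (p A2 + p B2 + aj))"
     "r B2 \<le> Cap (p B2 / aj)" using assms(4) by (auto simp: R4_of_def)
  have "Cap (p A2 / (p A1 + p B2 + ai)) \<le> Cap (p A2 / (p B2 + aj))"
    apply (rule Cap_mono)
    using f assms(1) apply simp
    apply (rule div_anti) using f assms lt by (auto simp: add_nonneg_pos)
  hence a2: "r A2 \<le> Cap (p A2 / (p B2 + aj))" using r by linarith
  show ?thesis unfolding achieved_by_def
    using r a2 by (auto simp: diffs insert_Diff_if recv_i_def recv_j_def add.assoc add.commute dest!: sub1 sub2)
qed

theorem proposition2:
  fixes Ptot ai aj :: real
  assumes "0 < Ptot" and "0 < ai" and "ai < aj"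
  shows "(\<forall>r\<in>R3 Ptot ai aj \<union> R4 Ptot ai aj. achievable ai aj (feasible_powers Ptot) r)
    \<and> (\<forall>p\<in>P3 Ptot ai aj. \<forall>r\<in>R3_of ai aj p.
          achieved_by ai aj p r [{B2}, {A1, A2}] [{B1}, {B2}])
    \<and> (\<forall>p\<in>P4 Ptot ai aj. \<forall>r\<in>R4_of ai aj p.
          achieved_by ai aj p r [{A2}, {A1}] [{B1}, {A2}, {B2}])"
proof -
  have s3: "P3 Ptot ai aj \<subseteq> feasible_powers Ptot" by (auto simp: P3_def)
  have s4: "P4 Ptot ai aj \<subseteq> feasible_powers Ptot" by (auto simp: P4_def)
  show ?thesis
    using part3[OF assms(2,3)] part4[OF assms(2,3)] s3 s4
    unfolding R3_def R4_def achievable_def by blast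
qed

end
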